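(* Suppose the total preorder $\succeq$ on $\mathcal{Q}_b$ is continuous (with respect to uniform convergence), monotonic, and satisfies the dual independence axiom. Then there exists a nonnegative, bounded, finitely additive measure $\mu$ on $\Sigma$ such that the functional $$U(\Phi)=\int_0^1\Phi(p)\,\mu(dp),\qquad \Phi\in B((0,1],\Sigma),$$ (integral with respect to a finitely additive measure) restricted to $\mathcal{Q}_b$ is a numerical representation of $\succeq$.
   Context: $\mathcal{Q}_b$ is the set of bounded, nondecreasing, left-continuous functions on $(0,1]$. $\Sigma$ is the algebra of subsets of $(0,1]$ generated by finite unions and intersections of intervals $(a,b]$, $0<a<b\le1$. $B((0,1],\Sigma)$ is the Banach space (sup norm) of uniform limits of $\Sigma$-simple functions $\sum\alpha_i\mathbf{1}_{A_i}$. Integration of functions in $B((0,1],\Sigma)$ against a bounded finitely additive measure is in the sense of Dunford–Schwartz. A total preorder is reflexive, transitive, complete; $\succ$ its strict part; continuity means closed upper and lower contour sets. Monotonic: $\Phi\ge\Psi$ pointwise implies $\Phi\succeq\Psi$. Dual independence axiom: $\Phi\succ\Psi$ implies $\alpha\Phi+(1-\alpha)\Upsilon\succ\alpha\Psi+(1-\alpha)\Upsilon$ for all $\Upsilon\in\mathcal{Q}_b$, $\alpha\in(0,1)$. Numerical representation: $\Phi\succ\Psi\iff U(\Phi)>U(\Psi)$. *)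

theory Defs
  imports "HOL-Analysis.Analysis"
begin

text \<open>Functions on (0,1] are represented as real => real; elements of Q_b are
  normalised to vanish outside (0,1].\<close>

definition Qb :: "(real \<Rightarrow> real) set" where
  "Qb = {\<Phi>. bdd_above (abs ` \<Phi> ` {0<..1})
           \<and> mono_on {0<..1} \<Phi>
           \<and> (\<forall>p\<in>{0<..1}. continuous (at_left p) \<Phi>)
           \<and> (\<forall>x. x \<notin> {0<..1} \<longrightarrow> \<Phi> x = 0)}"

inductive_set SigmaAlg :: "real set set" where
  empty: "{} \<in> SigmaAlg"
| interval: "0 < a \<Longrightarrow> a < b \<Longrightarrow> b \<le> 1 \<Longrightarrow> {a<..b} \<in> SigmaAlg"
| compl: "A \<in> SigmaAlg \<Longrightarrow> {0<..1} - A \<in> SigmaAlg"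
| union: "A \<in> SigmaAlg \<Longrightarrow> B \<in> SigmaAlg \<Longrightarrow> A \<union> B \<in> SigmaAlg"
| inter: "A \<in> SigmaAlg \<Longrightarrow> B \<in> SigmaAlg \<Longrightarrow> A \<inter> B \<in> SigmaAlg"

definition fa_measure :: "(real set \<Rightarrow> real) \<Rightarrow> bool" where
  "fa_measure \<mu> \<longleftrightarrow> \<mu> {} = 0
     \<and> (\<forall>A\<in>SigmaAlg. 0 \<le> \<mu> A)
     \<and> (\<exists>M. \<forall>A\<in>SigmaAlg. \<bar>\<mu> A\<bar> \<le> M)
     \<and> (\<forall>A\<in>SigmaAlg. \<forall>B\<in>SigmaAlg. A \<inter> B = {} \<longrightarrow> \<mu> (A \<union> B) = \<mu> A + \<mu> B)"

definition simple_eval :: "(real \<times> real set) list \<Rightarrow> real \<Rightarrow> real" where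
  "simple_eval xs x = (\<Sum>(\<alpha>, A)\<leftarrow>xs. \<alpha> * indicator A x)"

definition simple_int :: "(real set \<Rightarrow> real) \<Rightarrow> (real \<times> real set) list \<Rightarrow> real" where
  "simple_int \<mu> xs = (\<Sum>(\<alpha>, A)\<leftarrow>xs. \<alpha> * \<mu> A)"

text \<open>B((0,1],Sigma): uniform limits of SigmaAlg-simple functions.\<close>
definition Bspace :: "(real \<Rightarrow> real) set" where
  "Bspace = {f. \<forall>\<epsilon>>0. \<exists>xs. set (map snd xs) \<subseteq> SigmaAlg
                 \<and> (\<forall>x\<in>{0<..1}. \<bar>f x - simple_eval xs x\<bar> \<le> \<epsilon>)}"

text \<open>Dunford--Schwartz integral of f in B((0,1],Sigma): the limit of the integrals of
  simple functions converging uniformly to f.\<close>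
definition has_fa_integral :: "(real set \<Rightarrow> real) \<Rightarrow> (real \<Rightarrow> real) \<Rightarrow> real \<Rightarrow> bool" where
  "has_fa_integral \<mu> f c \<longleftrightarrow>
     (\<forall>\<epsilon>>0. \<exists>\<delta>>0. \<forall>xs. set (map snd xs) \<subseteq> SigmaAlg
        \<and> (\<forall>x\<in>{0<..1}. \<bar>f x - simple_eval xs x\<bar> \<le> \<delta>)
        \<longrightarrow> \<bar>c - simple_int \<mu> xs\<bar> \<le> \<epsilon>)"

definition fa_integral :: "(real set \<Rightarrow> real) \<Rightarrow> (real \<Rightarrow> real) \<Rightarrow> real" where
  "fa_integral \<mu> f = (THE c. has_fa_integral \<mu> f c)"

text \<open>Properties of a binary relation R (R x y meaning x \<succeq> y) on Qb.\<close>
definition strict_part :: "('a \<Rightarrow> 'a \<Rightarrow> bool) \<Rightarrow> 'a \<Rightarrow> 'a \<Rightarrow> bool" where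
  "strict_part R x y \<longleftrightarrow> R x y \<and> \<not> R y x"

definition total_preorder_on :: "'a set \<Rightarrow> ('a \<Rightarrow> 'a \<Rightarrow> bool) \<Rightarrow> bool" where
  "total_preorder_on S R \<longleftrightarrow>
     (\<forall>x\<in>S. R x x) \<and> (\<forall>x\<in>S. \<forall>y\<in>S. \<forall>z\<in>S. R x y \<longrightarrow> R y z \<longrightarrow> R x z)
     \<and> (\<forall>x\<in>S. \<forall>y\<in>S. R x y \<or> R y x)"

definition unif_conv :: "(nat \<Rightarrow> real \<Rightarrow> real) \<Rightarrow> (real \<Rightarrow> real) \<Rightarrow> bool" where
  "unif_conv F \<Phi> \<longleftrightarrow> (\<forall>\<epsilon>>0. \<exists>N. \<forall>n\<ge>N. \<forall>x\<in>{0<..1}. \<bar>F n x - \<Phi> x\<bar> \<le> \<epsilon>)"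

text \<open>Continuity: upper and lower contour sets closed in Qb w.r.t. the sup norm
  (sequential closedness, equivalent in a metric space).\<close>
definition pref_continuous :: "((real \<Rightarrow> real) \<Rightarrow> (real \<Rightarrow> real) \<Rightarrow> bool) \<Rightarrow> bool" where
  "pref_continuous R \<longleftrightarrow>
     (\<forall>\<Psi>\<in>Qb. \<forall>F \<Phi>. (\<forall>n. F n \<in> Qb) \<longrightarrow> \<Phi> \<in> Qb \<longrightarrow> unif_conv F \<Phi> \<longrightarrow>
        ((\<forall>n. R (F n) \<Psi>) \<longrightarrow> R \<Phi> \<Psi>) \<and> ((\<forall>n. R \<Psi> (F n)) \<longrightarrow> R \<Psi> \<Phi>))"

definition pref_monotonic :: "((real \<Rightarrow> real) \<Rightarrow> (real \<Rightarrow> real) \<Rightarrow> bool) \<Rightarrow> bool" where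
  "pref_monotonic R \<longleftrightarrow>
     (\<forall>\<Phi>\<in>Qb. \<forall>\<Psi>\<in>Qb. (\<forall>p\<in>{0<..1}. \<Phi> p \<ge> \<Psi> p) \<longrightarrow> R \<Phi> \<Psi>)"

definition dual_independence :: "((real \<Rightarrow> real) \<Rightarrow> (real \<Rightarrow> real) \<Rightarrow> bool) \<Rightarrow> bool" where
  "dual_independence R \<longleftrightarrow>
     (\<forall>\<Phi>\<in>Qb. \<forall>\<Psi>\<in>Qb. \<forall>\<Upsilon>\<in>Qb. \<forall>\<alpha>::real. 0 < \<alpha> \<and> \<alpha> < 1 \<longrightarrow>
        strict_part R \<Phi> \<Psi> \<longrightarrow>
        strict_part R (\<lambda>p. \<alpha> * \<Phi> p + (1 - \<alpha>) * \<Upsilon> p) (\<lambda>p. \<alpha> * \<Psi> p + (1 - \<alpha>) * \<Upsilon> p))"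

end

theory Submission imports Defs begin

definition kc :: "real \<Rightarrow> real \<Rightarrow> real" where
  "kc c = (\<lambda>x. if x \<in> {0<..1} then c else 0)"

lemma Qb_bound: assumes "\<Phi> \<in> Qb" shows "\<exists>B. \<forall>x\<in>{0<..1}. \<bar>\<Phi> x\<bar> \<le> B"
proof -
  from assms obtain B where "\<forall>y\<in>abs ` \<Phi> ` {0<..1}. y \<le> B" unfolding Qb_def bdd_above_def by blast
  then show ?thesis by auto
qed

lemma Qb_out: "\<Phi> \<in> Qb \<Longrightarrow> x \<notin> {0<..1} \<Longrightarrow> \<Phi> x = 0"
  unfolding Qb_def by auto

lemma Qb_mono: "\<Phi> \<in> Qb \<Longrightarrow> x \<in> {0<..1} \<Longrightarrow> y \<in> {0<..1} \<Longrightarrow> x \<le> y \<Longrightarrow> \<Phi> x \<le> \<Phi> y"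
  unfolding Qb_def by (auto simp: monotone_on_def)

lemma Qb_cont: "\<Phi> \<in> Qb \<Longrightarrow> p \<in> {0<..1} \<Longrightarrow> (\<Phi> \<longlongrightarrow> \<Phi> p) (at_left p)"
  unfolding Qb_def by (auto simp: continuous_within)

lemma QbI:
  assumes "\<And>x. x \<in> {0<..1} \<Longrightarrow> \<bar>\<Phi> x\<bar> \<le> B"
    and "\<And>x y. x \<in> {0<..1} \<Longrightarrow> y \<in> {0<..1} \<Longrightarrow> x \<le> y \<Longrightarrow> \<Phi> x \<le> \<Phi> y"
    and "\<And>p. p \<in> {0<..1} \<Longrightarrow> (\<Phi> \<longlongrightarrow> \<Phi> p) (at_left p)"
    and "\<And>x. x \<notin> {0<..1} \<Longrightarrow> \<Phi> x = 0"
  shows "\<Phi> \<in> Qb"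
  unfolding Qb_def
proof (intro CollectI conjI)
  show "bdd_above (abs ` \<Phi> ` {0<..1})" using assms(1) by (intro bdd_aboveI[of _ B]) auto
  show "mono_on {0<..1} \<Phi>" using assms(2) by (auto simp: monotone_on_def)
  show "\<forall>p\<in>{0<..1}. continuous (at_left p) \<Phi>" using assms(3) by (auto simp: continuous_within)
  show "\<forall>x. x \<notin> {0<..1} \<longrightarrow> \<Phi> x = 0" using assms(4) by auto
qed

lemma at_left_ev_pos: fixes p :: real assumes "p \<in> {0<..1}" shows "eventually (\<lambda>x. x \<in> {0<..<p}) (at_left p)"
  using eventually_at_left_real[of 0 p] assms by auto

lemma Qb_kc: "kc c \<in> Qb"
proof (rule QbI[where B="\<bar>c\<bar>"])
  fix p :: real assume p: "p \<in> {0<..1}"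
  have "eventually (\<lambda>x. kc c x = kc c p) (at_left p)"
    using at_left_ev_pos[OF p] by eventually_elim (use p in \<open>auto simp: kc_def\<close>)
  then show "(kc c \<longlongrightarrow> kc c p) (at_left p)" by (rule tendsto_eventually)
qed (auto simp: kc_def)

lemma Qb_add: "\<Phi> \<in> Qb \<Longrightarrow> \<Psi> \<in> Qb \<Longrightarrow> (\<lambda>x. \<Phi> x + \<Psi> x) \<in> Qb"
proof -
  assume a: "\<Phi> \<in> Qb" "\<Psi> \<in> Qb"
  obtain B1 B2 where b: "\<forall>x\<in>{0<..1}. \<bar>\<Phi> x\<bar> \<le> B1" "\<forall>x\<in>{0<..1}. \<bar>\<Psi> x\<bar> \<le> B2"
    using Qb_bound a by metis
  show ?thesis
  proof (rule QbI[where B="B1+B2"])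
    fix x :: real assume "x \<in> {0<..1}" then show "\<bar>\<Phi> x + \<Psi> x\<bar> \<le> B1 + B2" using b
      by (smt (verit))
  next
    fix x y :: real assume "x \<in> {0<..1}" "y \<in> {0<..1}" "x \<le> y"
    then show "\<Phi> x + \<Psi> x \<le> \<Phi> y + \<Psi> y" using Qb_mono a by (meson add_mono)
  next
    fix p :: real assume "p \<in> {0<..1}" then show "((\<lambda>x. \<Phi> x + \<Psi> x) \<longlongrightarrow> \<Phi> p + \<Psi> p) (at_left p)"
      using Qb_cont a by (intro tendsto_add) auto
  qed (use a in \<open>auto simp: Qb_def\<close>)
qed

lemma Qb_scale: "\<Phi> \<in> Qb \<Longrightarrow> c \<ge> 0 \<Longrightarrow> (\<lambda>x. c * \<Phi> x) \<in> Qb"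
proof -
  assume a: "\<Phi> \<in> Qb" "c \<ge> 0"
  obtain B1 where b: "\<forall>x\<in>{0<..1}. \<bar>\<Phi> x\<bar> \<le> B1"
    using Qb_bound a by metis
  show ?thesis
  proof (rule QbI[where B="c*B1"])
    fix x :: real assume "x \<in> {0<..1}" then show "\<bar>c * \<Phi> x\<bar> \<le> c * B1" using b a
      by (simp add: abs_mult mult_left_mono)
  next
    fix x y :: real assume "x \<in> {0<..1}" "y \<in> {0<..1}" "x \<le> y"
    then show "c * \<Phi> x \<le> c * \<Phi> y" using Qb_mono a by (simp add: mult_left_mono)
  next
    fix p :: real assume "p \<in> {0<..1}" then show "((\<lambda>x. c * \<Phi> x) \<longlongrightarrow> c * \<Phi> p) (at_left p)"
      using Qb_cont a by (intro tendsto_mult) auto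
  qed (use a in \<open>auto simp: Qb_def\<close>)
qed

lemma Qb_mult: "\<Phi> \<in> Qb \<Longrightarrow> \<Psi> \<in> Qb \<Longrightarrow> (\<forall>x\<in>{0<..1}. \<Phi> x \<ge> 0) \<Longrightarrow> (\<forall>x\<in>{0<..1}. \<Psi> x \<ge> 0)
   \<Longrightarrow> (\<lambda>x. \<Phi> x * \<Psi> x) \<in> Qb"
proof -
  assume a: "\<Phi> \<in> Qb" "\<Psi> \<in> Qb" and n: "\<forall>x\<in>{0<..1}. \<Phi> x \<ge> 0" "\<forall>x\<in>{0<..1}. \<Psi> x \<ge> 0"
  obtain B1 B2 where b: "\<forall>x\<in>{0<..1}. \<bar>\<Phi> x\<bar> \<le> B1" "\<forall>x\<in>{0<..1}. \<bar>\<Psi> x\<bar> \<le> B2"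
    using Qb_bound a by metis
  show ?thesis
  proof (rule QbI[where B="B1*B2"])
    fix x :: real assume "x \<in> {0<..1}" then show "\<bar>\<Phi> x * \<Psi> x\<bar> \<le> B1 * B2" using b
      by (simp add: abs_mult mult_mono')
  next
    fix x y :: real assume "x \<in> {0<..1}" "y \<in> {0<..1}" "x \<le> y"
    then show "\<Phi> x * \<Psi> x \<le> \<Phi> y * \<Psi> y" using Qb_mono[OF a(1)] Qb_mono[OF a(2)] n
      by (meson mult_mono order_trans)
  next
    fix p :: real assume "p \<in> {0<..1}" then show "((\<lambda>x. \<Phi> x * \<Psi> x) \<longlongrightarrow> \<Phi> p * \<Psi> p) (at_left p)"
      using Qb_cont a by (intro tendsto_mult) auto
  qed (use a in \<open>auto simp: Qb_def\<close>)
qed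

lemma Qb_ind: "(indicator {a<..1} :: real \<Rightarrow> real) \<in> Qb" if "a \<ge> 0"
proof (rule QbI[where B=1])
  fix p :: real assume p: "p \<in> {0<..1}"
  show "(indicator {a<..1} \<longlongrightarrow> (indicator {a<..1} p :: real)) (at_left p)"
  proof (cases "p \<le> a")
    case True
    have "eventually (\<lambda>x. indicator {a<..1} x = (indicator {a<..1} p :: real)) (at_left p)"
      using at_left_ev_pos[OF p] by eventually_elim (use p True in \<open>auto simp: indicator_def\<close>)
    then show ?thesis by (rule tendsto_eventually)
  next
    case False
    have "eventually (\<lambda>x. x \<in> {a<..<p}) (at_left p)" using eventually_at_left_real False by auto
    then have "eventually (\<lambda>x. indicator {a<..1} x = (indicator {a<..1} p :: real)) (at_left p)"
      by eventually_elim (use p False in \<open>auto simp: indicator_def\<close>)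
    then show ?thesis by (rule tendsto_eventually)
  qed
qed (use that in \<open>auto simp: indicator_def\<close>)

lemma SigmaAlg_sub: "A \<in> SigmaAlg \<Longrightarrow> A \<subseteq> {0<..1}"
  by (induction rule: SigmaAlg.induct) auto

definition Vs :: "(real \<Rightarrow> real) set" where
  "Vs = {f. \<exists>\<Phi>\<in>Qb. \<exists>\<Psi>\<in>Qb. f = (\<lambda>x. \<Phi> x - \<Psi> x)}"

lemma Qb_zero: "(\<lambda>x. 0) \<in> Qb"
proof -
  have "kc 0 = (\<lambda>x. 0)" by (auto simp: kc_def)
  then show ?thesis using Qb_kc[of 0] by simp
qed

lemma Vs_Qb: "\<Phi> \<in> Qb \<Longrightarrow> \<Phi> \<in> Vs"
  unfolding Vs_def using Qb_zero by (intro CollectI bexI[of _ \<Phi>] bexI[of _ "\<lambda>x. 0"]) auto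

lemma VsI: "P \<in> Qb \<Longrightarrow> N \<in> Qb \<Longrightarrow> f = (\<lambda>x. P x - N x) \<Longrightarrow> f \<in> Vs"
  unfolding Vs_def by blast

lemma Vs_add: "f \<in> Vs \<Longrightarrow> g \<in> Vs \<Longrightarrow> (\<lambda>x. f x + g x) \<in> Vs"
proof -
  assume "f \<in> Vs" "g \<in> Vs"
  then obtain P1 N1 P2 N2 where h: "P1 \<in> Qb" "N1 \<in> Qb" "P2 \<in> Qb" "N2 \<in> Qb"
    "f = (\<lambda>x. P1 x - N1 x)" "g = (\<lambda>x. P2 x - N2 x)" unfolding Vs_def by blast
  show ?thesis
  proof (rule VsI[OF Qb_add[OF h(1,3)] Qb_add[OF h(2,4)]])
    show "(\<lambda>x. f x + g x) = (\<lambda>x. (P1 x + P2 x) - (N1 x + N2 x))"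
      unfolding h(5,6) by (simp add: fun_eq_iff)
  qed
qed

lemma Vs_smult: "f \<in> Vs \<Longrightarrow> (\<lambda>x. c * f x) \<in> Vs"
proof -
  assume "f \<in> Vs"
  then obtain P1 N1 where h: "P1 \<in> Qb" "N1 \<in> Qb"
    "f = (\<lambda>x. P1 x - N1 x)" unfolding Vs_def by blast
  show ?thesis
  proof (cases "c \<ge> 0")
    case True
    show ?thesis
    proof (rule VsI[OF Qb_scale[OF h(1) True] Qb_scale[OF h(2) True]])
      show "(\<lambda>x. c * f x) = (\<lambda>x. c * P1 x - c * N1 x)"
        unfolding h(3) by (simp add: fun_eq_iff right_diff_distrib)
    qed
  next
    case False
    then have c: "-c \<ge> 0" by simp
    show ?thesis
    proof (rule VsI[OF Qb_scale[OF h(2) c] Qb_scale[OF h(1) c]])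
      show "(\<lambda>x. c * f x) = (\<lambda>x. (-c) * N1 x - (-c) * P1 x)"
        unfolding h(3) by (simp add: fun_eq_iff right_diff_distrib)
    qed
  qed
qed

lemma Vs_diff: "f \<in> Vs \<Longrightarrow> g \<in> Vs \<Longrightarrow> (\<lambda>x. f x - g x) \<in> Vs"
  using Vs_add[of f "\<lambda>x. (-1) * g x"] Vs_smult[of g "-1"] by simp

lemma Vs_shift:
  assumes "f \<in> Vs"
  shows "\<exists>P\<in>Qb. \<exists>N\<in>Qb. f = (\<lambda>x. P x - N x) \<and> (\<forall>x\<in>{0<..1}. P x \<ge> 0 \<and> N x \<ge> 0)"
proof -
  obtain P1 N1 where h: "P1 \<in> Qb" "N1 \<in> Qb"
    "f = (\<lambda>x. P1 x - N1 x)" using assms unfolding Vs_def by blast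
  obtain B1 B2 where b: "\<forall>x\<in>{0<..1}. \<bar>P1 x\<bar> \<le> B1" "\<forall>x\<in>{0<..1}. \<bar>N1 x\<bar> \<le> B2"
    using Qb_bound h by metis
  define P where "P = (\<lambda>x. P1 x + kc (B1+B2) x)"
  define N where "N = (\<lambda>x. N1 x + kc (B1+B2) x)"
  have B: "\<forall>x\<in>{0<..1}. P x \<ge> 0 \<and> N x \<ge> 0" using b
    unfolding kc_def P_def N_def by (smt (verit))
  have e: "f = (\<lambda>x. P x - N x)" unfolding h(3) P_def N_def by (simp add: fun_eq_iff)
  have "P \<in> Qb" unfolding P_def by (rule Qb_add[OF h(1) Qb_kc])
  moreover have "N \<in> Qb" unfolding N_def by (rule Qb_add[OF h(2) Qb_kc])
  ultimately show ?thesis using e B by blast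
qed

lemma Vs_mult: "f \<in> Vs \<Longrightarrow> g \<in> Vs \<Longrightarrow> (\<lambda>x. f x * g x) \<in> Vs"
proof -
  assume f: "f \<in> Vs" and g: "g \<in> Vs"
  obtain P1 N1 where h1: "P1 \<in> Qb" "N1 \<in> Qb"
    "f = (\<lambda>x. P1 x - N1 x)" and n1: "\<forall>x\<in>{0<..1}. P1 x \<ge> 0 \<and> N1 x \<ge> 0"
    using Vs_shift[OF f] by blast
  obtain P2 N2 where h2: "P2 \<in> Qb" "N2 \<in> Qb"
    "g = (\<lambda>x. P2 x - N2 x)" and n2: "\<forall>x\<in>{0<..1}. P2 x \<ge> 0 \<and> N2 x \<ge> 0"
    using Vs_shift[OF g] by blast
  note h = h1(1,2) h2(1,2) h1(3) h2(3)
  note n = n1 n2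
  have q: "(\<lambda>x. P1 x * P2 x) \<in> Qb" "(\<lambda>x. N1 x * N2 x) \<in> Qb"
    "(\<lambda>x. P1 x * N2 x) \<in> Qb" "(\<lambda>x. N1 x * P2 x) \<in> Qb"
    using Qb_mult[OF h1(1) h2(1)] Qb_mult[OF h1(2) h2(2)] Qb_mult[OF h1(1) h2(2)] Qb_mult[OF h1(2) h2(1)] n by auto
  show ?thesis
  proof (rule VsI[OF Qb_add[OF q(1,2)] Qb_add[OF q(3,4)]])
    show "(\<lambda>x. f x * g x) = (\<lambda>x. (P1 x * P2 x + N1 x * N2 x) - (P1 x * N2 x + N1 x * P2 x))"
      unfolding h(5,6) by (simp add: fun_eq_iff algebra_simps)
  qed
qed

lemma Vs_kc: "kc c \<in> Vs" using Vs_Qb Qb_kc by blast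

lemma ind_Vs: "A \<in> SigmaAlg \<Longrightarrow> (indicator A :: real \<Rightarrow> real) \<in> Vs"
proof (induction rule: SigmaAlg.induct)
  case empty
  then show ?case using Vs_Qb[OF Qb_zero] by simp
next
  case (interval a b)
  have "(indicator {a<..b} :: real \<Rightarrow> real) = (\<lambda>x. indicator {a<..1} x - indicator {b<..1} x)"
    using interval by (auto simp: indicator_def fun_eq_iff)
  then show ?case using Vs_diff[OF Vs_Qb[OF Qb_ind] Vs_Qb[OF Qb_ind], of a b] interval by simp
next
  case (compl A)
  have "(indicator ({0<..1} - A) :: real \<Rightarrow> real) = (\<lambda>x. kc 1 x - indicator A x)"
    using SigmaAlg_sub[OF compl(1)] by (auto simp: indicator_def fun_eq_iff kc_def)
  then show ?case using Vs_diff[OF Vs_kc compl(2)] by simp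
next
  case (union A B)
  have "(indicator (A \<union> B) :: real \<Rightarrow> real) = (\<lambda>x. (indicator A x + indicator B x) - indicator A x * indicator B x)"
    by (auto simp: indicator_def fun_eq_iff)
  then show ?case using Vs_diff[OF Vs_add[OF union(3,4)] Vs_mult[OF union(3,4)]] by simp
next
  case (inter A B)
  have "(indicator (A \<inter> B) :: real \<Rightarrow> real) = (\<lambda>x. indicator A x * indicator B x)"
    by (auto simp: indicator_def fun_eq_iff)
  then show ?case using Vs_mult[OF inter(3,4)] by simp
qed


lemma upper_SigmaAlg:
  assumes Q: "\<Phi> \<in> Qb"
  shows "{p\<in>{0<..1}. t < \<Phi> p} \<in> SigmaAlg"
proof (cases "{p\<in>{0<..1}. t < \<Phi> p} = {}")
  case True
  show ?thesis by (subst True) (rule SigmaAlg.empty)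
next
  case False
  define S where "S = {p\<in>{0<..1}. t < \<Phi> p}"
  define a where "a = Inf S"
  have ne: "S \<noteq> {}" using False S_def by simp
  have bdd: "bdd_below S" unfolding S_def by (intro bdd_belowI[of _ 0]) auto
  have a0: "a \<ge> 0" unfolding a_def using ne by (intro cInf_greatest) (auto simp: S_def)
  have eq: "S = {a<..1}"
  proof (intro set_eqI iffI)
    fix x assume xS: "x \<in> S"
    have ax: "a \<le> x" unfolding a_def using xS bdd by (rule cInf_lower)
    have x01: "x \<in> {0<..1}" "t < \<Phi> x" using xS S_def by auto
    have "a \<noteq> x"
    proof
      assume ax': "a = x"
      have "eventually (\<lambda>y. t < \<Phi> y) (at_left x)"
        using order_tendstoD(1)[OF Qb_cont[OF Q x01(1)] x01(2)] .
      moreover have "eventually (\<lambda>y. y \<in> {0<..<x}) (at_left x)" using at_left_ev_pos[OF x01(1)] .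
      ultimately have "eventually (\<lambda>y. t < \<Phi> y \<and> y \<in> {0<..<x}) (at_left x)"
        by (rule eventually_conj)
      then obtain y where y: "t < \<Phi> y" "y \<in> {0<..<x}"
        using eventually_happens' trivial_limit_at_left_real by blast
      then have "y \<in> S" using x01 unfolding S_def by auto
      then have "a \<le> y" unfolding a_def using bdd by (rule cInf_lower)
      then show False using y ax' by auto
    qed
    then show "x \<in> {a<..1}" using ax x01 by auto
  next
    fix x assume x: "x \<in> {a<..1}"
    then have "Inf S < x" unfolding a_def by simp
    then obtain q where q: "q \<in> S" "q < x" using cInf_lessD[OF ne] by blast
    have x01: "x \<in> {0<..1}" using x a0 by auto
    have "\<Phi> q \<le> \<Phi> x" using Qb_mono[OF Q _ x01] q unfolding S_def by auto
    then show "x \<in> S" using q x01 unfolding S_def by auto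
  qed
  have "a < 1" using eq ne by (cases "a < 1") auto
  show ?thesis
  proof (cases "a = 0")
    case True
    have "{0<..1::real} - {} \<in> SigmaAlg" by (rule SigmaAlg.compl[OF SigmaAlg.empty])
    then show ?thesis using eq True S_def by simp
  next
    case False
    then show ?thesis using eq S_def SigmaAlg.interval[of a 1] a0 \<open>a < 1\<close> by simp
  qed
qed

lemma count_le:
  fixes y :: real
  shows "0 \<le> y \<Longrightarrow> y \<le> real N \<Longrightarrow> \<bar>y - (\<Sum>k=1..N. if real k < y then 1 else 0)\<bar> \<le> 1"
proof (induction N arbitrary: y)
  case 0
  then show ?case by simp
next
  case (Suc N)
  have split: "(\<Sum>k=1..Suc N. if real k < y then 1 else (0::real))
      = (\<Sum>k=1..N. if real k < y then 1 else 0) + (if real (Suc N) < y then 1 else 0)"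
    by simp
  show ?case
  proof (cases "y \<le> real N")
    case True
    then show ?thesis using Suc split by simp
  next
    case False
    have "(\<Sum>k=1..N. if real k < y then 1 else (0::real)) = (\<Sum>k=1..N. 1)"
      by (rule sum.cong) (use False in auto)
    then show ?thesis using split False Suc.prems by simp
  qed
qed

lemma simple_eval_Nil: "simple_eval [] x = 0"
  by (simp add: simple_eval_def)

lemma simple_eval_Cons: "simple_eval ((a, A) # xs) x = a * indicator A x + simple_eval xs x"
  by (simp add: simple_eval_def)

lemma simple_eval_map: "simple_eval (map (\<lambda>k. (c, S k)) ks) x = (\<Sum>k\<leftarrow>ks. c * indicator (S k) x)"
  by (induction ks) (auto simp: simple_eval_def)

lemma approx:
  assumes Q: "\<Phi> \<in> Qb" and d: "\<delta> > 0"
  shows "\<exists>xs. set (map snd xs) \<subseteq> SigmaAlg \<and> (\<forall>x\<in>{0<..1}. \<bar>\<Phi> x - simple_eval xs x\<bar> \<le> \<delta>)"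
proof -
  obtain B where B: "\<forall>x\<in>{0<..1}. \<bar>\<Phi> x\<bar> \<le> B" using Qb_bound[OF Q] by blast
  define m where "m = -B"
  define N where "N = nat \<lceil>2 * B / \<delta>\<rceil>"
  define S where "S = (\<lambda>k::nat. {p\<in>{0<..1}. m + real k * \<delta> < \<Phi> p})"
  define xs where "xs = (m, {0<..1::real}) # map (\<lambda>k. (\<delta>, S k)) [1..<N+1]"
  have "set (map snd xs) \<subseteq> SigmaAlg"
    unfolding xs_def using upper_SigmaAlg[OF Q] SigmaAlg.compl[OF SigmaAlg.empty]
    by (auto simp: S_def)
  moreover have "\<bar>\<Phi> x - simple_eval xs x\<bar> \<le> \<delta>" if x: "x \<in> {0<..1}" for x
  proof -
    define y where "y = (\<Phi> x - m) / \<delta>"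
    have "-B \<le> \<Phi> x" using B x by force
    then have y0: "0 \<le> y" using d unfolding y_def m_def by simp
    have "\<Phi> x \<le> B" using B x by force
    then have "y \<le> 2 * B / \<delta>" unfolding y_def m_def using d by (intro divide_right_mono) auto
    also have "\<dots> \<le> real N" unfolding N_def by linarith
    finally have yN: "y \<le> real N" .
    have ind: "indicator (S k) x = (if real k < y then 1 else (0::real))" for k
    proof -
      have "(m + real k * \<delta> < \<Phi> x) = (real k < y)"
        unfolding y_def using d by (simp add: field_simps)
      then show ?thesis using x by (simp add: S_def indicator_def)
    qed
    have "simple_eval xs x = m + (\<Sum>k\<leftarrow>[1..<N+1]. \<delta> * indicator (S k) x)"
      unfolding xs_def simple_eval_Cons simple_eval_map using x by simp
    also have "(\<Sum>k\<leftarrow>[1..<N+1]. \<delta> * indicator (S k) x) = (\<Sum>k\<in>{1..<N+1}. \<delta> * indicator (S k) x)"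
      by (metis sum_set_upt_conv_sum_list_nat set_upt)
    also have "\<dots> = (\<Sum>k\<in>{1..N}. \<delta> * indicator (S k) x)"
      by (rule sum.cong) auto
    also have "\<dots> = \<delta> * (\<Sum>k=1..N. if real k < y then 1 else 0)"
      by (simp add: ind sum_distrib_left)
    finally have se: "simple_eval xs x = m + \<delta> * (\<Sum>k=1..N. if real k < y then 1 else 0)" .
    have "\<Phi> x - simple_eval xs x = \<delta> * (y - (\<Sum>k=1..N. if real k < y then 1 else 0))"
      unfolding se y_def using d by (simp add: field_simps)
    then have "\<bar>\<Phi> x - simple_eval xs x\<bar> = \<delta> * \<bar>y - (\<Sum>k=1..N. if real k < y then 1 else 0)\<bar>"
      using d by (simp add: abs_mult)
    also have "\<dots> \<le> \<delta> * 1" using count_le[OF y0 yN] d by (intro mult_left_mono) auto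
    finally show ?thesis by simp
  qed
  ultimately show ?thesis by blast
qed


lemma fa_unique:
  assumes Q: "\<Phi> \<in> Qb" and h1: "has_fa_integral \<mu> \<Phi> c1" and h2: "has_fa_integral \<mu> \<Phi> c2"
  shows "c1 = c2"
proof (rule ccontr)
  assume ne: "c1 \<noteq> c2"
  define e where "e = \<bar>c1 - c2\<bar> / 3"
  have e: "e > 0" using ne e_def by simp
  obtain d1 where d1: "d1 > 0" "\<forall>xs. set (map snd xs) \<subseteq> SigmaAlg \<and> (\<forall>x\<in>{0<..1}. \<bar>\<Phi> x - simple_eval xs x\<bar> \<le> d1)
        \<longrightarrow> \<bar>c1 - simple_int \<mu> xs\<bar> \<le> e"
    using h1 e unfolding has_fa_integral_def by blast
  obtain d2 where d2: "d2 > 0" "\<forall>xs. set (map snd xs) \<subseteq> SigmaAlg \<and> (\<forall>x\<in>{0<..1}. \<bar>\<Phi> x - simple_eval xs x\<bar> \<le> d2)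
        \<longrightarrow> \<bar>c2 - simple_int \<mu> xs\<bar> \<le> e"
    using h2 e unfolding has_fa_integral_def by blast
  obtain xs where xs: "set (map snd xs) \<subseteq> SigmaAlg" "\<forall>x\<in>{0<..1}. \<bar>\<Phi> x - simple_eval xs x\<bar> \<le> min d1 d2"
    using approx[OF Q, of "min d1 d2"] d1 d2 by auto
  have "\<bar>c1 - simple_int \<mu> xs\<bar> \<le> e" using d1(2) xs by force
  moreover have "\<bar>c2 - simple_int \<mu> xs\<bar> \<le> e" using d2(2) xs by force
  ultimately have "\<bar>c1 - c2\<bar> \<le> 2 * e" by (simp add: abs_le_iff)
  then show False using e_def ne by simp
qed

locale linU =
  fixes U :: "(real \<Rightarrow> real) \<Rightarrow> real"
  assumes U_add: "\<Phi> \<in> Qb \<Longrightarrow> \<Psi> \<in> Qb \<Longrightarrow> U (\<lambda>x. \<Phi> x + \<Psi> x) = U \<Phi> + U \<Psi>"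
    and U_scale: "\<Phi> \<in> Qb \<Longrightarrow> c \<ge> 0 \<Longrightarrow> U (\<lambda>x. c * \<Phi> x) = c * U \<Phi>"
    and U_mono: "\<Phi> \<in> Qb \<Longrightarrow> \<Psi> \<in> Qb \<Longrightarrow> (\<forall>x\<in>{0<..1}. \<Psi> x \<le> \<Phi> x) \<Longrightarrow> U \<Psi> \<le> U \<Phi>"
begin

definition Ut where "Ut f = (SOME c. \<exists>\<Phi>\<in>Qb. \<exists>\<Psi>\<in>Qb. f = (\<lambda>x. \<Phi> x - \<Psi> x) \<and> c = U \<Phi> - U \<Psi>)"

lemma Ut_eq:
  assumes a: "\<Phi> \<in> Qb" "\<Psi> \<in> Qb" "f = (\<lambda>x. \<Phi> x - \<Psi> x)"
  shows "Ut f = U \<Phi> - U \<Psi>"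
proof -
  have "\<exists>c. \<exists>\<Phi>\<in>Qb. \<exists>\<Psi>\<in>Qb. f = (\<lambda>x. \<Phi> x - \<Psi> x) \<and> c = U \<Phi> - U \<Psi>" using a by blast
  from someI_ex[OF this] obtain P N where pn: "P \<in> Qb" "N \<in> Qb" "f = (\<lambda>x. P x - N x)" "Ut f = U P - U N"
    unfolding Ut_def[symmetric] by blast
  have "(\<lambda>x. \<Phi> x + N x) = (\<lambda>x. P x + \<Psi> x)"
  proof
    fix x
    have "\<Phi> x - \<Psi> x = P x - N x" using a(3) pn(3) by metis
    then show "\<Phi> x + N x = P x + \<Psi> x" by simp
  qed
  then have "U \<Phi> + U N = U P + U \<Psi>" using U_add a pn by metis
  then show ?thesis using pn by simp
qed

lemma U_zero: "U (\<lambda>x. 0) = 0"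
  using U_scale[OF Qb_zero, of 0] by simp

lemma Ut_Qb: "\<Phi> \<in> Qb \<Longrightarrow> Ut \<Phi> = U \<Phi>"
  using Ut_eq[of \<Phi> "\<lambda>x. 0" \<Phi>] Qb_zero U_zero by simp

lemma Ut_add: assumes "f \<in> Vs" "g \<in> Vs" shows "Ut (\<lambda>x. f x + g x) = Ut f + Ut g"
proof -
  obtain P1 N1 P2 N2 where h: "P1 \<in> Qb" "N1 \<in> Qb" "P2 \<in> Qb" "N2 \<in> Qb"
    "f = (\<lambda>x. P1 x - N1 x)" "g = (\<lambda>x. P2 x - N2 x)" using assms unfolding Vs_def by blast
  have e: "(\<lambda>x. f x + g x) = (\<lambda>x. (P1 x + P2 x) - (N1 x + N2 x))"
    unfolding h(5,6) by (simp add: fun_eq_iff)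
  show ?thesis
    unfolding Ut_eq[OF Qb_add[OF h(1,3)] Qb_add[OF h(2,4)] e] Ut_eq[OF h(1,2,5)] Ut_eq[OF h(3,4,6)]
      U_add[OF h(1,3)] U_add[OF h(2,4)] by simp
qed

lemma Ut_smult: assumes "f \<in> Vs" shows "Ut (\<lambda>x. c * f x) = c * Ut f"
proof -
  obtain P1 N1 where h: "P1 \<in> Qb" "N1 \<in> Qb"
    "f = (\<lambda>x. P1 x - N1 x)" using assms unfolding Vs_def by blast
  show ?thesis
  proof (cases "c \<ge> 0")
    case True
    have e: "(\<lambda>x. c * f x) = (\<lambda>x. c * P1 x - c * N1 x)"
      unfolding h(3) by (simp add: fun_eq_iff right_diff_distrib)
    show ?thesis unfolding Ut_eq[OF Qb_scale[OF h(1) True] Qb_scale[OF h(2) True] e] Ut_eq[OF h]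
      U_scale[OF h(1) True] U_scale[OF h(2) True] by (simp add: right_diff_distrib)
  next
    case False
    then have c: "-c \<ge> 0" by simp
    have e: "(\<lambda>x. c * f x) = (\<lambda>x. (-c) * N1 x - (-c) * P1 x)"
      unfolding h(3) by (simp add: fun_eq_iff right_diff_distrib)
    show ?thesis unfolding Ut_eq[OF Qb_scale[OF h(2) c] Qb_scale[OF h(1) c] e] Ut_eq[OF h]
      U_scale[OF h(1) c] U_scale[OF h(2) c] by (simp add: right_diff_distrib)
  qed
qed

lemma Ut_diff: assumes "f \<in> Vs" "g \<in> Vs" shows "Ut (\<lambda>x. f x - g x) = Ut f - Ut g"
  using Ut_add[OF assms(1) Vs_smult[OF assms(2), of "-1"]] Ut_smult[OF assms(2), of "-1"] by simp

lemma Ut_pos: assumes "f \<in> Vs" "\<forall>x\<in>{0<..1}. f x \<ge> 0" shows "Ut f \<ge> 0"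
proof -
  obtain P1 N1 where h: "P1 \<in> Qb" "N1 \<in> Qb"
    "f = (\<lambda>x. P1 x - N1 x)" using assms unfolding Vs_def by blast
  have "\<forall>x\<in>{0<..1}. N1 x \<le> P1 x" using assms(2) h(3) by auto
  then have "U N1 \<le> U P1" using U_mono h by blast
  then show ?thesis using Ut_eq[OF h] by simp
qed

lemma U1_nonneg: "U (kc 1) \<ge> 0"
proof -
  have "U (kc 0) \<le> U (kc 1)" using U_mono[OF Qb_kc[of 1] Qb_kc[of 0]] by (auto simp: kc_def)
  moreover have "kc 0 = (\<lambda>x. 0)" by (auto simp: kc_def)
  ultimately show ?thesis using U_zero by simp
qed

lemma Ut_bound: assumes f: "f \<in> Vs" and b: "\<forall>x\<in>{0<..1}. \<bar>f x\<bar> \<le> d" shows "\<bar>Ut f\<bar> \<le> d * U (kc 1)"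
proof -
  have d: "d \<ge> 0" using b by (metis abs_ge_zero greaterThanAtMost_iff order_trans zero_less_one order_refl)
  have kd: "kc d = (\<lambda>x. d * kc 1 x)" by (auto simp: kc_def)
  have "U (kc d) = d * U (kc 1)" by (subst kd) (rule U_scale[OF Qb_kc d])
  then have Ukd: "Ut (kc d) = d * U (kc 1)" using Ut_Qb[OF Qb_kc] by simp
  have "Ut (\<lambda>x. kc d x - f x) \<ge> 0"
    using b by (intro Ut_pos Vs_diff Vs_kc f) (auto simp: kc_def)
  moreover have "Ut (\<lambda>x. kc d x + f x) \<ge> 0"
    using b by (intro Ut_pos Vs_add Vs_kc f) (auto simp: kc_def)
  ultimately show ?thesis using Ut_diff[OF Vs_kc f] Ut_add[OF Vs_kc f] Ukd by (simp add: abs_le_iff)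
qed

definition mu where "mu A = Ut (indicator A)"

lemma mu_fa: "fa_measure mu"
  unfolding fa_measure_def
proof (intro conjI ballI impI)
  have "(indicator {} :: real \<Rightarrow> real) = (\<lambda>x. 0)" by (simp add: fun_eq_iff)
  then show "mu {} = 0" unfolding mu_def using Ut_Qb[OF Qb_zero] U_zero by simp
  fix A assume A: "A \<in> SigmaAlg"
  show "0 \<le> mu A" unfolding mu_def using ind_Vs[OF A] by (intro Ut_pos) auto
next
  show "\<exists>M. \<forall>A\<in>SigmaAlg. \<bar>mu A\<bar> \<le> M"
  proof (intro exI ballI)
    fix A assume A: "A \<in> SigmaAlg"
    show "\<bar>mu A\<bar> \<le> 1 * U (kc 1)" unfolding mu_def
      by (rule Ut_bound[OF ind_Vs[OF A]]) (auto simp: indicator_def)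
  qed
next
  fix A B assume A: "A \<in> SigmaAlg" and B: "B \<in> SigmaAlg" and d: "A \<inter> B = {}"
  have "(indicator (A \<union> B) :: real \<Rightarrow> real) = (\<lambda>x. indicator A x + indicator B x)"
    using d by (auto simp: indicator_def fun_eq_iff)
  then show "mu (A \<union> B) = mu A + mu B" unfolding mu_def using Ut_add[OF ind_Vs[OF A] ind_Vs[OF B]] by simp
qed

lemma simple_Vs:
  "set (map snd xs) \<subseteq> SigmaAlg \<Longrightarrow> simple_eval xs \<in> Vs \<and> Ut (simple_eval xs) = simple_int mu xs"
proof (induction xs)
  case Nil
  have "simple_eval [] = (\<lambda>x. 0)" by (simp add: fun_eq_iff simple_eval_def)
  then show ?case using Vs_Qb[OF Qb_zero] Ut_Qb[OF Qb_zero] U_zero by (simp add: simple_int_def)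
next
  case (Cons p xs)
  obtain a A where p: "p = (a, A)" by (cases p)
  have A: "A \<in> SigmaAlg" and xs: "set (map snd xs) \<subseteq> SigmaAlg" using Cons.prems p by auto
  have IH: "simple_eval xs \<in> Vs" "Ut (simple_eval xs) = simple_int mu xs" using Cons.IH[OF xs] by auto
  have e: "simple_eval (p # xs) = (\<lambda>x. a * indicator A x + simple_eval xs x)"
    unfolding p by (simp add: fun_eq_iff simple_eval_Cons)
  have si: "simple_int mu (p # xs) = a * mu A + simple_int mu xs" unfolding p by (simp add: simple_int_def)
  have V: "(\<lambda>x. a * indicator A x) \<in> Vs" using Vs_smult[OF ind_Vs[OF A]] .
  show ?case unfolding e si using Vs_add[OF V IH(1)] Ut_add[OF V IH(1)] Ut_smult[OF ind_Vs[OF A]] IH(2)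
    by (simp add: mu_def)
qed

lemma has_int: assumes Q: "\<Phi> \<in> Qb" shows "has_fa_integral mu \<Phi> (U \<Phi>)"
  unfolding has_fa_integral_def
proof (intro allI impI)
  fix e :: real assume e: "e > 0"
  define d where "d = e / (U (kc 1) + 1)"
  have U1: "U (kc 1) \<ge> 0" by (rule U1_nonneg)
  have d: "d > 0" unfolding d_def using e U1 by simp
  have dU: "d * U (kc 1) \<le> e"
  proof -
    have "d * U (kc 1) = e * (U (kc 1) / (U (kc 1) + 1))" unfolding d_def by simp
    also have "\<dots> \<le> e * 1" using e U1 by (intro mult_left_mono) auto
    finally show ?thesis by simp
  qed
  show "\<exists>\<delta>>0. \<forall>xs. set (map snd xs) \<subseteq> SigmaAlg \<and> (\<forall>x\<in>{0<..1}. \<bar>\<Phi> x - simple_eval xs x\<bar> \<le> \<delta>) \<longrightarrow>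
            \<bar>U \<Phi> - simple_int mu xs\<bar> \<le> e"
  proof (intro exI[of _ d] conjI allI impI d)
    fix xs assume xs: "set (map snd xs) \<subseteq> SigmaAlg \<and> (\<forall>x\<in>{0<..1}. \<bar>\<Phi> x - simple_eval xs x\<bar> \<le> d)"
    have s: "simple_eval xs \<in> Vs" "Ut (simple_eval xs) = simple_int mu xs" using simple_Vs xs by auto
    have "\<bar>Ut (\<lambda>x. \<Phi> x - simple_eval xs x)\<bar> \<le> d * U (kc 1)"
      using xs by (intro Ut_bound Vs_diff Vs_Qb Q s(1)) auto
    moreover have "Ut (\<lambda>x. \<Phi> x - simple_eval xs x) = U \<Phi> - simple_int mu xs"
      using Ut_diff[OF Vs_Qb[OF Q] s(1)] Ut_Qb[OF Q] s(2) by simp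
    ultimately show "\<bar>U \<Phi> - simple_int mu xs\<bar> \<le> e" using dU by simp
  qed
qed

lemma fa_int: "\<Phi> \<in> Qb \<Longrightarrow> fa_integral mu \<Phi> = U \<Phi>"
  unfolding fa_integral_def using has_int fa_unique by blast

lemma exists_mu: "\<exists>\<mu>. fa_measure \<mu> \<and> (\<forall>\<Phi>\<in>Qb. fa_integral \<mu> \<Phi> = U \<Phi>)"
  using mu_fa fa_int by blast

end


definition mix :: "real \<Rightarrow> (real \<Rightarrow> real) \<Rightarrow> (real \<Rightarrow> real) \<Rightarrow> real \<Rightarrow> real" where
  "mix \<alpha> \<Phi> \<Psi> = (\<lambda>p. \<alpha> * \<Phi> p + (1 - \<alpha>) * \<Psi> p)"

lemma Qb_mix: "\<Phi> \<in> Qb \<Longrightarrow> \<Psi> \<in> Qb \<Longrightarrow> 0 \<le> \<alpha> \<Longrightarrow> \<alpha> \<le> 1 \<Longrightarrow> mix \<alpha> \<Phi> \<Psi> \<in> Qb"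
  unfolding mix_def by (intro Qb_add Qb_scale) auto

lemma kc_mix: "mix \<alpha> (kc a) (kc b) = kc (\<alpha> * a + (1 - \<alpha>) * b)"
  by (auto simp: kc_def mix_def fun_eq_iff)

lemma unif_convI:
  fixes F :: "nat \<Rightarrow> real \<Rightarrow> real" and G :: "real \<Rightarrow> real"
  assumes K: "K \<ge> 0" and b: "\<And>n x. x \<in> {0<..1} \<Longrightarrow> \<bar>F n x - G x\<bar> \<le> K / (real n + 1)"
  shows "unif_conv F G"
  unfolding unif_conv_def
proof (intro allI impI)
  fix e :: real assume e: "e > 0"
  obtain N :: nat where N: "K / e < real N" using reals_Archimedean2 by blast
  show "\<exists>N. \<forall>n\<ge>N. \<forall>x\<in>{0<..1::real}. \<bar>F n x - G x\<bar> \<le> e"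
  proof (intro exI[of _ N] allI impI ballI)
    fix n :: nat and x :: real assume n: "N \<le> n" and x: "x \<in> {0<..1}"
    have "K < e * real N" using N e by (simp add: field_simps)
    also have "\<dots> \<le> e * (real n + 1)" using n e by (intro mult_left_mono) auto
    finally have "K / (real n + 1) \<le> e" by (simp add: field_simps)
    then show "\<bar>F n x - G x\<bar> \<le> e" using b[OF x, of n] by linarith
  qed
qed

locale pref =
  fixes R :: "(real \<Rightarrow> real) \<Rightarrow> (real \<Rightarrow> real) \<Rightarrow> bool"
  assumes tp: "total_preorder_on Qb R"
    and pc: "pref_continuous R"
    and pm: "pref_monotonic R"
    and di: "dual_independence R"
begin

abbreviation "sp \<equiv> strict_part R"

lemma R_refl: "\<Phi> \<in> Qb \<Longrightarrow> R \<Phi> \<Phi>" using tp unfolding total_preorder_on_def by blast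
lemma R_trans: "\<Phi> \<in> Qb \<Longrightarrow> \<Psi> \<in> Qb \<Longrightarrow> \<Upsilon> \<in> Qb \<Longrightarrow> R \<Phi> \<Psi> \<Longrightarrow> R \<Psi> \<Upsilon> \<Longrightarrow> R \<Phi> \<Upsilon>"
  using tp unfolding total_preorder_on_def by blast
lemma R_total: "\<Phi> \<in> Qb \<Longrightarrow> \<Psi> \<in> Qb \<Longrightarrow> R \<Phi> \<Psi> \<or> R \<Psi> \<Phi>"
  using tp unfolding total_preorder_on_def by blast
lemma R_mono: "\<Phi> \<in> Qb \<Longrightarrow> \<Psi> \<in> Qb \<Longrightarrow> (\<And>p. p \<in> {0<..1} \<Longrightarrow> \<Psi> p \<le> \<Phi> p) \<Longrightarrow> R \<Phi> \<Psi>"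
  using pm unfolding pref_monotonic_def by blast
lemma cont_up: "\<Psi> \<in> Qb \<Longrightarrow> (\<And>n. F n \<in> Qb) \<Longrightarrow> \<Phi> \<in> Qb \<Longrightarrow> unif_conv F \<Phi> \<Longrightarrow> (\<And>n. R (F n) \<Psi>) \<Longrightarrow> R \<Phi> \<Psi>"
  using pc unfolding pref_continuous_def by blast
lemma cont_down: "\<Psi> \<in> Qb \<Longrightarrow> (\<And>n. F n \<in> Qb) \<Longrightarrow> \<Phi> \<in> Qb \<Longrightarrow> unif_conv F \<Phi> \<Longrightarrow> (\<And>n. R \<Psi> (F n)) \<Longrightarrow> R \<Psi> \<Phi>"
  using pc unfolding pref_continuous_def by blast
lemma indep: "\<Phi> \<in> Qb \<Longrightarrow> \<Psi> \<in> Qb \<Longrightarrow> \<Upsilon> \<in> Qb \<Longrightarrow> 0 < \<alpha> \<Longrightarrow> \<alpha> < 1 \<Longrightarrow> sp \<Phi> \<Psi> \<Longrightarrow>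
   sp (mix \<alpha> \<Phi> \<Upsilon>) (mix \<alpha> \<Psi> \<Upsilon>)"
  using di unfolding dual_independence_def mix_def by blast

lemma sp_trans1: "X \<in> Qb \<Longrightarrow> Y \<in> Qb \<Longrightarrow> Z \<in> Qb \<Longrightarrow> R X Y \<Longrightarrow> sp Y Z \<Longrightarrow> sp X Z"
  unfolding strict_part_def using R_trans by blast
lemma sp_trans2: "X \<in> Qb \<Longrightarrow> Y \<in> Qb \<Longrightarrow> Z \<in> Qb \<Longrightarrow> sp X Y \<Longrightarrow> R Y Z \<Longrightarrow> sp X Z"
  unfolding strict_part_def using R_trans by blast

lemma kc_R: "y \<le> x \<Longrightarrow> R (kc x) (kc y)"
  by (rule R_mono[OF Qb_kc Qb_kc]) (auto simp: kc_def)

lemma const_small: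
  assumes ab: "sp (kc a) (kc b)" and xy: "y < x" "x - y < a - b"
  shows "sp (kc x) (kc y)"
proof -
  define \<alpha> where "\<alpha> = (x - y) / (a - b)"
  have ab': "a - b > 0" using xy by simp
  have al: "0 < \<alpha>" "\<alpha> < 1" unfolding \<alpha>_def using xy ab' by (auto simp: field_simps)
  define z where "z = (y - \<alpha> * b) / (1 - \<alpha>)"
  have z: "(1 - \<alpha>) * z = y - \<alpha> * b" unfolding z_def using al by simp
  have ex: "\<alpha> * a + (1 - \<alpha>) * z = x"
  proof -
    have "\<alpha> * (a - b) = x - y" unfolding \<alpha>_def using ab' by simp
    then show ?thesis using z by (simp add: algebra_simps)
  qed
  have ey: "\<alpha> * b + (1 - \<alpha>) * z = y" using z by simp
  have "sp (mix \<alpha> (kc a) (kc z)) (mix \<alpha> (kc b) (kc z))"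
    by (rule indep[OF Qb_kc Qb_kc Qb_kc al ab])
  then show ?thesis unfolding kc_mix ex ey .
qed

lemma const_strict:
  assumes ab: "sp (kc a) (kc b)" and xy: "y < x"
  shows "sp (kc x) (kc y)"
proof -
  have "a > b"
  proof (rule ccontr)
    assume "\<not> a > b"
    then have "R (kc b) (kc a)" by (intro kc_R) auto
    then show False using ab unfolding strict_part_def by blast
  qed
  show ?thesis
  proof (cases "x - y < a - b")
    case True
    then show ?thesis using const_small[OF ab xy] by blast
  next
    case False
    define y' where "y' = y + (a - b) / 2"
    have "sp (kc y') (kc y)" using const_small[OF ab] \<open>a > b\<close> unfolding y'_def by auto
    moreover have "R (kc x) (kc y')"
    proof (rule kc_R)
      have "(a - b) / 2 \<le> a - b" using \<open>a > b\<close> by simp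
      then show "y' \<le> x" unfolding y'_def using False by linarith
    qed
    ultimately show ?thesis using sp_trans1[OF Qb_kc Qb_kc Qb_kc] by blast
  qed
qed

lemma degenerate:
  assumes nd: "\<not> sp (kc 1) (kc 0)" and Q: "\<Phi> \<in> Qb" "\<Psi> \<in> Qb"
  shows "\<not> sp \<Phi> \<Psi>"
proof
  assume s: "sp \<Phi> \<Psi>"
  obtain B1 B2 where b: "\<forall>x\<in>{0<..1}. \<bar>\<Phi> x\<bar> \<le> B1" "\<forall>x\<in>{0<..1}. \<bar>\<Psi> x\<bar> \<le> B2"
    using Qb_bound Q by metis
  define B where "B = B1 + B2"
  have "B1 \<ge> 0" "B2 \<ge> 0" using b by (metis abs_ge_zero greaterThanAtMost_iff order_trans zero_less_one order_refl)+
  have r1: "R (kc B) \<Phi>" using b \<open>B2 \<ge> 0\<close> unfolding B_def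
    by (intro R_mono[OF Qb_kc Q(1)]) (force simp: kc_def)
  have r2: "R \<Psi> (kc (-B))" using b \<open>B1 \<ge> 0\<close> unfolding B_def
    by (intro R_mono[OF Q(2) Qb_kc]) (force simp: kc_def)
  have "sp (kc B) \<Psi>" using sp_trans1[OF Qb_kc Q r1 s] .
  then have "sp (kc B) (kc (-B))" using sp_trans2[OF Qb_kc Q(2) Qb_kc _ r2] by blast
  then have "sp (kc 1) (kc 0)" by (rule const_strict) simp
  then show False using nd by blast
qed

end

locale pref_nd = pref +
  assumes nd: "strict_part R (kc 1) (kc 0)"
begin

lemma kc_sp: "y < x \<Longrightarrow> sp (kc x) (kc y)"
  by (rule const_strict[OF nd])

lemma kc_R_iff: "R (kc x) (kc y) \<longleftrightarrow> y \<le> x"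
  using kc_R kc_sp unfolding strict_part_def by (meson not_le)

lemma ce_exists:
  assumes Q: "\<Phi> \<in> Qb"
  shows "\<exists>c. R \<Phi> (kc c) \<and> R (kc c) \<Phi>"
proof -
  obtain B where b: "\<forall>x\<in>{0<..1}. \<bar>\<Phi> x\<bar> \<le> B" using Qb_bound Q by metis
  have B0: "B \<ge> 0" using b by (metis abs_ge_zero greaterThanAtMost_iff order_trans zero_less_one order_refl)
  define m where "m = -B"
  have rM: "R (kc B) \<Phi>" using b by (intro R_mono[OF Qb_kc Q]) (force simp: kc_def)
  have rm: "R \<Phi> (kc m)" using b unfolding m_def by (intro R_mono[OF Q Qb_kc]) (force simp: kc_def)
  define S where "S = {c. m \<le> c \<and> R (kc c) \<Phi>}"
  define c0 where "c0 = Inf S"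
  have "B \<in> S" using rM B0 unfolding S_def m_def by simp
  then have ne: "S \<noteq> {}" by blast
  have bdd: "bdd_below S" unfolding S_def by (intro bdd_belowI[of _ m]) auto
  have mc0: "m \<le> c0" unfolding c0_def using ne by (intro cInf_greatest) (auto simp: S_def)
  have "\<forall>n::nat. \<exists>c. c \<in> S \<and> c < c0 + 1 / (real n + 1)"
  proof
    fix n :: nat
    have "Inf S < c0 + 1 / (real n + 1)" unfolding c0_def by (simp add: add_pos_pos)
    then show "\<exists>c. c \<in> S \<and> c < c0 + 1 / (real n + 1)" using cInf_lessD[OF ne] by blast
  qed
  from choice[OF this] obtain cs where cs': "\<forall>n. cs n \<in> S \<and> cs n < c0 + 1 / (real n + 1)" by blast
  then have cs: "\<And>n. cs n \<in> S" "\<And>n. cs n < c0 + 1 / (real n + 1)" by auto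
  have csge: "c0 \<le> cs n" for n unfolding c0_def using cs(1) bdd by (rule cInf_lower)
  have up: "R (kc c0) \<Phi>"
  proof (rule cont_up[OF Q, of "\<lambda>n. kc (cs n)"])
    show "kc (cs n) \<in> Qb" for n by (rule Qb_kc)
    show "kc c0 \<in> Qb" by (rule Qb_kc)
    show "R (kc (cs n)) \<Phi>" for n using cs(1) unfolding S_def by auto
    show "unif_conv (\<lambda>n. kc (cs n)) (kc c0)"
    proof (rule unif_convI[of 1])
      fix n x assume "x \<in> {0<..1::real}"
      then show "\<bar>kc (cs n) x - kc c0 x\<bar> \<le> 1 / (real n + 1)"
        using cs(2)[of n] csge[of n] by (auto simp: kc_def)
    qed simp
  qed
  have down: "R \<Phi> (kc c0)"
  proof (cases "c0 = m")
    case True then show ?thesis using rm by simp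
  next
    case False
    then have gt: "c0 > m" using mc0 by simp
    define ys where "ys = (\<lambda>n::nat. c0 - (c0 - m) / (real n + 1))"
    have ys: "m \<le> ys n" "ys n < c0" for n
    proof -
      have "(c0 - m) / (real n + 1) \<le> (c0 - m) / 1" using gt by (intro divide_left_mono) auto
      then show "m \<le> ys n" unfolding ys_def by simp
      show "ys n < c0" unfolding ys_def using gt by simp
    qed
    have rn: "R \<Phi> (kc (ys n))" for n
    proof -
      have "ys n \<notin> S"
      proof
        assume "ys n \<in> S"
        then have "c0 \<le> ys n" unfolding c0_def using bdd by (rule cInf_lower)
        then show False using ys(2)[of n] by simp
      qed
      then have "\<not> R (kc (ys n)) \<Phi>" using ys(1)[of n] unfolding S_def by auto
      then show ?thesis using R_total[OF Q Qb_kc] by blast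
    qed
    show ?thesis
    proof (rule cont_down[OF Q, of "\<lambda>n. kc (ys n)", OF Qb_kc Qb_kc])
      show "R \<Phi> (kc (ys n))" for n by (rule rn)
      show "unif_conv (\<lambda>n. kc (ys n)) (kc c0)"
      proof (rule unif_convI[of "c0 - m"])
        fix n x assume "x \<in> {0<..1::real}"
        then show "\<bar>kc (ys n) x - kc c0 x\<bar> \<le> (c0 - m) / (real n + 1)"
          using gt by (auto simp: kc_def ys_def)
      qed (use gt in simp)
    qed
  qed
  show ?thesis using up down by blast
qed

definition CE where "CE \<Phi> = (SOME c. R \<Phi> (kc c) \<and> R (kc c) \<Phi>)"

lemma CE: "\<Phi> \<in> Qb \<Longrightarrow> R \<Phi> (kc (CE \<Phi>)) \<and> R (kc (CE \<Phi>)) \<Phi>"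
  unfolding CE_def using someI_ex[OF ce_exists] by blast

lemma CE_unique: assumes Q: "\<Phi> \<in> Qb" and c: "R \<Phi> (kc c)" "R (kc c) \<Phi>" shows "CE \<Phi> = c"
proof -
  have "R (kc (CE \<Phi>)) (kc c)" using R_trans[OF Qb_kc Q Qb_kc] CE[OF Q] c by blast
  moreover have "R (kc c) (kc (CE \<Phi>))" using R_trans[OF Qb_kc Q Qb_kc] CE[OF Q] c by blast
  ultimately show ?thesis unfolding kc_R_iff by simp
qed

lemma CE_kc: "CE (kc c) = c"
  using CE_unique[OF Qb_kc] R_refl[OF Qb_kc] by blast

lemma rep: assumes "\<Phi> \<in> Qb" "\<Psi> \<in> Qb" shows "R \<Phi> \<Psi> \<longleftrightarrow> CE \<Psi> \<le> CE \<Phi>"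
proof
  assume "R \<Phi> \<Psi>"
  then have "R (kc (CE \<Phi>)) (kc (CE \<Psi>))"
    using CE assms R_trans Qb_kc by meson
  then show "CE \<Psi> \<le> CE \<Phi>" by (simp add: kc_R_iff)
next
  assume "CE \<Psi> \<le> CE \<Phi>"
  then have "R (kc (CE \<Phi>)) (kc (CE \<Psi>))" by (simp add: kc_R_iff)
  then show "R \<Phi> \<Psi>" using CE assms R_trans Qb_kc by meson
qed

lemma rep_sp: "\<Phi> \<in> Qb \<Longrightarrow> \<Psi> \<in> Qb \<Longrightarrow> sp \<Phi> \<Psi> \<longleftrightarrow> CE \<Psi> < CE \<Phi>"
  unfolding strict_part_def using rep by auto

lemma indiff_mix:
  assumes Q: "\<Phi> \<in> Qb" "\<Upsilon> \<in> Qb" and c: "R \<Phi> (kc c)" "R (kc c) \<Phi>" and al: "0 < \<alpha>" "\<alpha> < 1"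
  shows "R (mix \<alpha> \<Phi> \<Upsilon>) (mix \<alpha> (kc c) \<Upsilon>) \<and> R (mix \<alpha> (kc c) \<Upsilon>) (mix \<alpha> \<Phi> \<Upsilon>)"
proof -
  have QX: "mix \<alpha> \<Phi> \<Upsilon> \<in> Qb" using Qb_mix Q al by auto
  have QM: "mix \<alpha> (kc d) \<Upsilon> \<in> Qb" for d using Qb_mix Q Qb_kc al by auto
  have conv: "unif_conv (\<lambda>n. mix \<alpha> (kc (c + s / (real n + 1))) \<Upsilon>) (mix \<alpha> (kc c) \<Upsilon>)" if s: "\<bar>s\<bar> = 1" for s
  proof (rule unif_convI[of 1])
    fix n x assume x: "x \<in> {0<..1::real}"
    have e1: "mix \<alpha> (kc (c + s / (real n + 1))) \<Upsilon> x - mix \<alpha> (kc c) \<Upsilon> x = \<alpha> * s / (real n + 1)"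
      using x by (simp add: mix_def kc_def algebra_simps)
    have "\<bar>\<alpha> * s / (real n + 1)\<bar> = \<alpha> * (1 / (real n + 1))" using al s by (simp add: abs_mult abs_divide)
    then have "\<bar>mix \<alpha> (kc (c + s / (real n + 1))) \<Upsilon> x - mix \<alpha> (kc c) \<Upsilon> x\<bar> = \<alpha> * (1 / (real n + 1))"
      using e1 by simp
    also have "\<dots> \<le> 1 * (1 / (real n + 1))" using al by (intro mult_right_mono) auto
    finally show "\<bar>mix \<alpha> (kc (c + s / (real n + 1))) \<Upsilon> x - mix \<alpha> (kc c) \<Upsilon> x\<bar> \<le> 1 / (real n + 1)" by simp
  qed simp
  have A: "R (mix \<alpha> (kc c) \<Upsilon>) (mix \<alpha> \<Phi> \<Upsilon>)"
  proof (rule cont_up[OF QX QM QM conv[of 1]])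
    fix n
    have "sp (kc (c + 1 / (real n + 1))) (kc c)" by (rule kc_sp) simp
    then have "sp (kc (c + 1 / (real n + 1))) \<Phi>" using sp_trans2[OF Qb_kc Qb_kc Q(1) _ c(2)] by blast
    then have "sp (mix \<alpha> (kc (c + 1 / (real n + 1))) \<Upsilon>) (mix \<alpha> \<Phi> \<Upsilon>)"
      by (rule indep[OF Qb_kc Q(1) Q(2) al])
    then show "R (mix \<alpha> (kc (c + 1 / (real n + 1))) \<Upsilon>) (mix \<alpha> \<Phi> \<Upsilon>)" unfolding strict_part_def by blast
  qed simp
  have B: "R (mix \<alpha> \<Phi> \<Upsilon>) (mix \<alpha> (kc c) \<Upsilon>)"
  proof (rule cont_down[OF QX QM QM conv[of "-1"]])
    fix n
    have "sp (kc c) (kc (c + -1 / (real n + 1)))" by (rule kc_sp) simp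
    then have "sp \<Phi> (kc (c + -1 / (real n + 1)))" using sp_trans1[OF Q(1) Qb_kc Qb_kc c(1)] by blast
    then have "sp (mix \<alpha> \<Phi> \<Upsilon>) (mix \<alpha> (kc (c + -1 / (real n + 1))) \<Upsilon>)"
      by (rule indep[OF Q(1) Qb_kc Q(2) al])
    then show "R (mix \<alpha> \<Phi> \<Upsilon>) (mix \<alpha> (kc (c + -1 / (real n + 1))) \<Upsilon>)" unfolding strict_part_def by blast
  qed simp
  show ?thesis using A B by blast
qed

lemma CE_mix:
  assumes Q: "\<Phi> \<in> Qb" "\<Psi> \<in> Qb" and al: "0 < \<alpha>" "\<alpha> < 1"
  shows "CE (mix \<alpha> \<Phi> \<Psi>) = \<alpha> * CE \<Phi> + (1 - \<alpha>) * CE \<Psi>"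
proof -
  define a where "a = CE \<Phi>"
  define b where "b = CE \<Psi>"
  have al': "0 < 1 - \<alpha>" "1 - \<alpha> < 1" using al by auto
  have 1: "R (mix \<alpha> \<Phi> \<Psi>) (mix \<alpha> (kc a) \<Psi>) \<and> R (mix \<alpha> (kc a) \<Psi>) (mix \<alpha> \<Phi> \<Psi>)"
    using indiff_mix[OF Q(1) Q(2) _ _ al] CE[OF Q(1)] unfolding a_def by blast
  have sw: "mix \<alpha> (kc a) \<Psi> = mix (1 - \<alpha>) \<Psi> (kc a)" by (simp add: mix_def fun_eq_iff algebra_simps)
  have 2: "R (mix (1 - \<alpha>) \<Psi> (kc a)) (mix (1 - \<alpha>) (kc b) (kc a)) \<and> R (mix (1 - \<alpha>) (kc b) (kc a)) (mix (1 - \<alpha>) \<Psi> (kc a))"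
    using indiff_mix[OF Q(2) Qb_kc _ _ al'] CE[OF Q(2)] unfolding b_def by blast
  have e: "mix (1 - \<alpha>) (kc b) (kc a) = kc (\<alpha> * a + (1 - \<alpha>) * b)" unfolding kc_mix by (simp add: algebra_simps)
  have QX: "mix \<alpha> \<Phi> \<Psi> \<in> Qb" using Qb_mix Q al by auto
  have QY: "mix (1 - \<alpha>) \<Psi> (kc a) \<in> Qb" using Qb_mix Q Qb_kc al by auto
  have "R (mix \<alpha> \<Phi> \<Psi>) (kc (\<alpha> * a + (1 - \<alpha>) * b)) \<and> R (kc (\<alpha> * a + (1 - \<alpha>) * b)) (mix \<alpha> \<Phi> \<Psi>)"
    using 1 2 R_trans[OF QX QY Qb_kc] R_trans[OF Qb_kc QY QX] unfolding sw e by blast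
  then show ?thesis using CE_unique[OF QX] unfolding a_def b_def by blast
qed

lemma CE_zero: "CE (\<lambda>x. 0) = 0"
proof -
  have "kc 0 = (\<lambda>x. 0)" by (auto simp: kc_def)
  then show ?thesis using CE_kc[of 0] by simp
qed

lemma CE_scale01: assumes Q: "\<Phi> \<in> Qb" and c: "0 \<le> c" "c \<le> 1" shows "CE (\<lambda>x. c * \<Phi> x) = c * CE \<Phi>"
proof -
  consider "c = 0" | "c = 1" | "0 < c \<and> c < 1" using c by linarith
  then show ?thesis
  proof cases
    case 1 then show ?thesis using CE_zero by simp
  next
    case 2 then show ?thesis by simp
  next
    case 3
    have "(\<lambda>x. c * \<Phi> x) = mix c \<Phi> (\<lambda>x. 0)" by (simp add: mix_def)
    then show ?thesis using CE_mix[OF Q Qb_zero] 3 CE_zero by simp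
  qed
qed

lemma CE_scale: assumes Q: "\<Phi> \<in> Qb" and c: "0 \<le> c" shows "CE (\<lambda>x. c * \<Phi> x) = c * CE \<Phi>"
proof (cases "c \<le> 1")
  case True then show ?thesis using CE_scale01[OF Q c] by simp
next
  case False
  have Q': "(\<lambda>x. c * \<Phi> x) \<in> Qb" using Qb_scale Q c by blast
  have "CE (\<lambda>x. (1/c) * (c * \<Phi> x)) = (1/c) * CE (\<lambda>x. c * \<Phi> x)"
    using CE_scale01[OF Q', of "1/c"] False by simp
  moreover have "(\<lambda>x. (1/c) * (c * \<Phi> x)) = \<Phi>" using False by simp
  ultimately show ?thesis using False by (simp add: field_simps)
qed

lemma CE_add: assumes Q: "\<Phi> \<in> Qb" "\<Psi> \<in> Qb" shows "CE (\<lambda>x. \<Phi> x + \<Psi> x) = CE \<Phi> + CE \<Psi>"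
proof -
  have QM: "mix (1/2) \<Phi> \<Psi> \<in> Qb" using Qb_mix Q by auto
  have "(\<lambda>x. \<Phi> x + \<Psi> x) = (\<lambda>x. 2 * mix (1/2) \<Phi> \<Psi> x)" by (simp add: mix_def fun_eq_iff)
  then show ?thesis using CE_scale[OF QM, of 2] CE_mix[OF Q, of "1/2"] by simp
qed

lemma CE_mono: "\<Phi> \<in> Qb \<Longrightarrow> \<Psi> \<in> Qb \<Longrightarrow> (\<forall>x\<in>{0<..1}. \<Psi> x \<le> \<Phi> x) \<Longrightarrow> CE \<Psi> \<le> CE \<Phi>"
  using rep R_mono by blast

lemma linU_CE: "linU CE"
  by unfold_locales (auto simp: CE_add CE_scale CE_mono)

end

theorem mainTheorem10:
  fixes R :: "(real \<Rightarrow> real) \<Rightarrow> (real \<Rightarrow> real) \<Rightarrow> bool"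
  assumes "total_preorder_on Qb R"
    and "pref_continuous R"
    and "pref_monotonic R"
    and "dual_independence R"
  shows "\<exists>\<mu>. fa_measure \<mu> \<and>
    (\<forall>\<Phi>\<in>Qb. \<forall>\<Psi>\<in>Qb. strict_part R \<Phi> \<Psi> \<longleftrightarrow> fa_integral \<mu> \<Phi> > fa_integral \<mu> \<Psi>)"
proof -
  interpret pref R using assms by unfold_locales
  show ?thesis
  proof (cases "strict_part R (kc 1) (kc 0)")
    case True
    interpret pref_nd R by unfold_locales (rule True)
    interpret linU CE by (rule linU_CE)
    obtain \<mu> where \<mu>: "fa_measure \<mu>" "\<forall>\<Phi>\<in>Qb. fa_integral \<mu> \<Phi> = CE \<Phi>" using exists_mu by blast
    show ?thesis using \<mu> rep_sp by auto
  next
    case False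
    interpret linU "\<lambda>_. 0" by unfold_locales auto
    obtain \<mu> where \<mu>: "fa_measure \<mu>" "\<forall>\<Phi>\<in>Qb. fa_integral \<mu> \<Phi> = 0" using exists_mu by blast
    show ?thesis using \<mu> degenerate[OF False] by auto
  qed
qed

end
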